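(* Let $\alpha>0$, $\eta=\alpha/(L+\alpha)$, $z_0\in\mathrm{dom}\, f^*$, and consider GCG: for $k\ge0$, $\bar z_k=\mathrm{argmin}_{v}\{\langle-\nabla(h^\alpha)^*(-z_k),v\rangle+f^*(v)\}$, $z_{k+1}=\eta\bar z_k+(1-\eta)z_k$. Define $\tilde y_0=\nabla(h^\alpha)^*(-z_0)$ and $\tilde y_{k+1}=(1-\eta)\tilde y_k+\eta\nabla(h^\alpha)^*(-z_k)$ for $k\ge0$. Then for all $k\ge0$, $\psi^\alpha(z_k)+\phi^\alpha(\tilde y_k)\le\frac{\psi^\alpha(z_0)+\phi^\alpha(\tilde y_0)}{(1+\alpha/L)^k}$.
   Context: Let $\|\cdot\|$ be a norm on $\mathbb{R}^n$ with dual norm $\|\cdot\|_*$. Let $f:\mathbb{R}^n\to\mathbb{R}$ be convex, differentiable and $L$-smooth ($L>0$) with respect to $\|\cdot\|$, $h:\mathbb{R}^n\to(-\infty,\infty]$ closed proper convex with bounded domain, and $w:\mathbb{R}^n\to[0,+\infty]$ closed, $1$-strongly convex with respect to $\|\cdot\|$ on $\mathrm{dom}\, h$, with $\max_{\mathrm{dom}\, h}w<\infty$. Let $h^\alpha=h+\alpha w$, $\phi^\alpha=f+h^\alpha$, $\psi^\alpha(z)=(h^\alpha)^*(-z)+f^*(z)$, with $^*$ the convex conjugate ($(h^\alpha)^*$ is differentiable with $(1/\alpha)$-Lipschitz gradient; $f^*$ is $(1/L)$-strongly convex w.r.t. $\|\cdot\|_*$). *)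

theory Defs
  imports "HOL-Analysis.Analysis"
begin

definition is_norm :: "('a::real_vector \<Rightarrow> real) \<Rightarrow> bool" where
  "is_norm N \<longleftrightarrow> (\<forall>x. N x = 0 \<longleftrightarrow> x = 0) \<and> (\<forall>c x. N (c *\<^sub>R x) = \<bar>c\<bar> * N x)
     \<and> (\<forall>x y. N (x + y) \<le> N x + N y)"

definition dual_norm :: "('a::real_inner \<Rightarrow> real) \<Rightarrow> 'a \<Rightarrow> real" where
  "dual_norm N z = Sup {z \<bullet> x | x. N x \<le> 1}"

definition edom :: "('a \<Rightarrow> ereal) \<Rightarrow> 'a set" where
  "edom g = {x. g x < \<infinity>}"

definition proper_fun :: "('a \<Rightarrow> ereal) \<Rightarrow> bool" where
  "proper_fun g \<longleftrightarrow> (\<forall>x. g x \<noteq> -\<infinity>) \<and> (\<exists>x. g x < \<infinity>)"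

definition epigraph :: "('a \<Rightarrow> ereal) \<Rightarrow> ('a \<times> real) set" where
  "epigraph g = {(x, t). g x \<le> ereal t}"

definition convex_fun :: "('a::real_vector \<Rightarrow> ereal) \<Rightarrow> bool" where
  "convex_fun g \<longleftrightarrow> convex (epigraph g)"

definition closed_fun :: "('a::real_normed_vector \<Rightarrow> ereal) \<Rightarrow> bool" where
  "closed_fun g \<longleftrightarrow> closed (epigraph g)"

definition strongly_convex_on :: "'a set \<Rightarrow> real \<Rightarrow> ('a::real_vector \<Rightarrow> real) \<Rightarrow> ('a \<Rightarrow> ereal) \<Rightarrow> bool" where
  "strongly_convex_on S \<mu> N g \<longleftrightarrow>
     (\<forall>x\<in>S. \<forall>y\<in>S. \<forall>t::real. 0 \<le> t \<and> t \<le> 1 \<longrightarrow>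
        g (t *\<^sub>R x + (1 - t) *\<^sub>R y)
          \<le> ereal t * g x + ereal (1 - t) * g y - ereal (\<mu> / 2 * t * (1 - t) * (N (x - y))\<^sup>2))"

definition conj :: "('a::real_inner \<Rightarrow> ereal) \<Rightarrow> 'a \<Rightarrow> ereal" where
  "conj g z = (SUP x. ereal (z \<bullet> x) - g x)"

end

theory Submission
  imports Defs
begin


lemma isn_basic:
  assumes N: "is_norm N"
  shows "N 0 = 0" "N (-x) = N x" "N x \<ge> 0" "N (x + y) \<le> N x + N y" "N (c *\<^sub>R x) = \<bar>c\<bar> * N x"
    "N x = 0 \<longleftrightarrow> x = 0"
proof -
  show z: "N 0 = 0" using N unfolding is_norm_def by auto
  have neg: "N (-x) = N x" for x
  proof -
    have "N ((-1) *\<^sub>R x) = \<bar>-1\<bar> * N x" using N unfolding is_norm_def by blast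
    then show ?thesis by simp
  qed
  show "N (-x) = N x" by (rule neg)
  have "N (x + -x) \<le> N x + N (-x)" using N unfolding is_norm_def by blast
  moreover have "N (-x) = N x" by (rule neg)
  ultimately show "N x \<ge> 0" using z by simp
  show "N (x + y) \<le> N x + N y" "N (c *\<^sub>R x) = \<bar>c\<bar> * N x" "N x = 0 \<longleftrightarrow> x = 0" using N unfolding is_norm_def by auto
qed

lemma isn_upper:
  fixes N :: "'a::euclidean_space \<Rightarrow> real"
  assumes N: "is_norm N"
  shows "\<exists>K. \<forall>x. N x \<le> K * norm x"
proof -
  have sub: "N (sum g S) \<le> (\<Sum>b\<in>S. N (g b))" if "finite S" for g and S :: "'a set"
    using that
  proof (induction S rule: finite_induct)
    case empty then show ?case using isn_basic(1)[OF N] by simp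
  next
    case (insert a S)
    then show ?case using isn_basic(4)[OF N, of "g a" "sum g S"] by simp
  qed
  have "N x \<le> (\<Sum>b\<in>Basis. N b) * norm x" for x
  proof -
    have "N x = N (\<Sum>b\<in>Basis. (x \<bullet> b) *\<^sub>R b)" by (simp add: euclidean_representation)
    also have "\<dots> \<le> (\<Sum>b\<in>Basis. N ((x \<bullet> b) *\<^sub>R b))" by (rule sub) simp
    also have "\<dots> = (\<Sum>b\<in>Basis. \<bar>x \<bullet> b\<bar> * N b)" using isn_basic(5)[OF N] by simp
    also have "\<dots> \<le> (\<Sum>b\<in>Basis. norm x * N b)"
      by (intro sum_mono mult_right_mono) (auto simp: Basis_le_norm isn_basic[OF N])
    finally show ?thesis by (simp add: sum_distrib_left mult.commute)
  qed
  then show ?thesis by blast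
qed

lemma isn_cont:
  fixes N :: "'a::euclidean_space \<Rightarrow> real"
  assumes N: "is_norm N"
  shows "continuous_on S N"
proof -
  obtain K0 where K0: "\<And>x. N x \<le> K0 * norm x" using isn_upper[OF N] by blast
  define K where "K = \<bar>K0\<bar> + 1"
  have Kp: "K > 0" unfolding K_def by simp
  have K: "N x \<le> K * norm x" for x
    unfolding K_def by (rule order_trans[OF K0[of x]], rule mult_right_mono) auto
  have lip: "\<bar>N x - N y\<bar> \<le> K * dist x y" for x y
  proof -
    have "N x \<le> N y + N (x - y)" using isn_basic(4)[OF N, of y "x - y"] by simp
    moreover have "N y \<le> N x + N (y - x)" using isn_basic(4)[OF N, of x "y - x"] by simp
    moreover have "N (y - x) = N (x - y)" using isn_basic(2)[OF N, of "x - y"] by simp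
    ultimately show ?thesis using K[of "x - y"] by (simp add: dist_norm)
  qed
  show ?thesis
    unfolding continuous_on_iff
  proof (intro ballI allI impI)
    fix x e assume "x \<in> S" "(e::real) > 0"
    show "\<exists>d>0. \<forall>x'\<in>S. dist x' x < d \<longrightarrow> dist (N x') (N x) < e"
    proof (intro exI[of _ "e / K"] conjI ballI impI)
      show "e / K > 0" using Kp \<open>e > 0\<close> by simp
      fix x' assume "dist x' x < e / K"
      then have "K * dist x' x < e" using Kp by (simp add: field_simps)
      then show "dist (N x') (N x) < e" using lip[of x' x] by (simp add: dist_real_def)
    qed
  qed
qed

lemma isn_lower:
  fixes N :: "'a::euclidean_space \<Rightarrow> real"
  assumes N: "is_norm N"
  shows "\<exists>c>0. \<forall>x. c * norm x \<le> N x"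
proof -
  have "compact (sphere (0::'a) 1)" by simp
  moreover have "sphere (0::'a) 1 \<noteq> {}"
  proof -
    obtain b :: 'a where "b \<in> Basis" using nonempty_Basis by blast
    then have "b \<in> sphere 0 1" by simp
    then show ?thesis by blast
  qed
  ultimately have "\<exists>p\<in>sphere 0 1. \<forall>y\<in>sphere 0 1. N p \<le> N y"
    by (rule continuous_attains_inf[OF _ _ isn_cont[OF N]])
  then obtain p where p: "p \<in> sphere 0 1" and pm0: "\<forall>y\<in>sphere 0 1. N p \<le> N y"
    by blast
  have pm: "N p \<le> N y" if "y \<in> sphere 0 1" for y using pm0 that by blast
  have "p \<noteq> 0" using p by auto
  then have c: "N p > 0" using isn_basic(3,6)[OF N, where x=p] by auto
  have "N p * norm x \<le> N x" for x
  proof (cases "x = 0")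
    case True then show ?thesis using isn_basic(1)[OF N] by simp
  next
    case False
    have "(1 / norm x) *\<^sub>R x \<in> sphere 0 1" using False by simp
    then have "N p \<le> N ((1 / norm x) *\<^sub>R x)" by (rule pm)
    also have "\<dots> = N x / norm x" using isn_basic(5)[OF N] by simp
    finally show ?thesis using False by (simp add: field_simps)
  qed
  then show ?thesis using c by blast
qed

lemma dual_pair:
  fixes N :: "'a::{euclidean_space} \<Rightarrow> real"
  assumes N: "is_norm N"
  shows "a \<bullet> x \<le> dual_norm N a * N x"
proof -
  obtain c where c: "c > 0" "\<And>x. c * norm x \<le> N x" using isn_lower[OF N] by blast
  have bdd: "bdd_above {a \<bullet> x | x. N x \<le> 1}"
  proof (rule bdd_aboveI)
    fix r assume "r \<in> {a \<bullet> x | x. N x \<le> 1}"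
    then obtain x where x: "r = a \<bullet> x" "N x \<le> 1" by blast
    have "norm x \<le> 1 / c" using c(2)[of x] x(2) c(1) by (simp add: field_simps)
    have "r \<le> norm a * norm x" using x(1) norm_cauchy_schwarz by simp
    also have "\<dots> \<le> norm a * (1 / c)" using \<open>norm x \<le> 1 / c\<close> by (intro mult_left_mono) auto
    finally show "r \<le> norm a / c" by simp
  qed
  show ?thesis
  proof (cases "x = 0")
    case True then show ?thesis using isn_basic(1)[OF N] by simp
  next
    case False
    then have Np: "N x > 0" using isn_basic(3,6)[OF N, where x=x] by auto
    have "N ((1 / N x) *\<^sub>R x) = 1" using isn_basic(5)[OF N, where c="1 / N x" and x=x] Np by simp
    then have "a \<bullet> ((1 / N x) *\<^sub>R x) \<le> dual_norm N a"
      unfolding dual_norm_def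
    proof (intro cSup_upper[OF _ bdd])
      show "a \<bullet> ((1 / N x) *\<^sub>R x) \<in> {a \<bullet> x |x. N x \<le> 1}"
      proof -
        have "a \<bullet> ((1 / N x) *\<^sub>R x) = a \<bullet> ((1 / N x) *\<^sub>R x) \<and> N ((1 / N x) *\<^sub>R x) \<le> 1"
          using \<open>N ((1 / N x) *\<^sub>R x) = 1\<close> by simp
        then show ?thesis unfolding mem_Collect_eq by (rule exI)
      qed
    qed
    then show ?thesis using Np by (simp add: field_simps)
  qed
qed



lemma epi_mem: "(x, t) \<in> epigraph g \<longleftrightarrow> g x \<le> ereal t"
  by (simp add: epigraph_def)

lemma epi_limit:
  fixes g :: "'a::real_normed_vector \<Rightarrow> ereal"
  assumes "closed_fun g" "(X \<longlongrightarrow> l) sequentially" "eventually (\<lambda>n. g (X n) \<le> ereal c) sequentially"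
  shows "g l \<le> ereal c"
proof -
  have "((\<lambda>n. (X n, c)) \<longlongrightarrow> (l, c)) sequentially" using assms(2) by (intro tendsto_Pair) auto
  moreover have "eventually (\<lambda>n. (X n, c) \<in> epigraph g) sequentially"
    using assms(3) by (simp add: epi_mem)
  ultimately have "(l, c) \<in> epigraph g"
    using assms(1) unfolding closed_fun_def by (intro Lim_in_closed_set) auto
  then show ?thesis by (simp add: epi_mem)
qed

lemma h_bdd_below:
  fixes h :: "'a::euclidean_space \<Rightarrow> ereal"
  assumes closed: "closed_fun h" and proper: "proper_fun h" and bdd: "bounded (edom h)"
  shows "\<exists>m. \<forall>x. ereal m \<le> h x"
proof (rule ccontr)
  assume "\<not> ?thesis"
  then have "\<forall>m. \<exists>x. h x < ereal m" by (auto simp: not_le)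
  then have "\<forall>n::nat. \<exists>x. h x < ereal (- real n)" by blast
  from choice[OF this] obtain X where X0: "\<forall>n. h (X n) < ereal (- real n)" by blast
  have X: "h (X n) < ereal (- real n)" for n using X0 by blast
  have Xd: "X n \<in> closure (edom h)" for n
    using X[of n] by (intro closure_subset[THEN subsetD]) (auto simp: edom_def)
  have "compact (closure (edom h))" using bdd by (simp add: compact_eq_bounded_closed bounded_closure)
  then obtain l r where l: "l \<in> closure (edom h)" and r: "strict_mono r" and lim: "((X \<circ> r) \<longlongrightarrow> l) sequentially"
    using compact_imp_seq_compact[unfolded seq_compact_def] Xd by metis
  have hl: "h l \<le> ereal (- real m)" for m
  proof (rule epi_limit[OF closed lim])
    show "eventually (\<lambda>n. h ((X \<circ> r) n) \<le> ereal (- real m)) sequentially"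
      unfolding eventually_sequentially
    proof (intro exI[of _ m] allI impI)
      fix n assume "m \<le> n"
      then have "m \<le> r n" using seq_suble[OF r, of n] by simp
      then have "h (X (r n)) < ereal (- real m)" using X[of "r n"] by (smt (verit) ereal_less_eq(3) order_less_le_trans of_nat_mono)
      then show "h ((X \<circ> r) n) \<le> ereal (- real m)" by simp
    qed
  qed
  show False
  proof (cases "h l")
    case (real q)
    obtain m :: nat where "real m > - q" using reals_Archimedean2 by blast
    then show False using hl[of m] real by simp
  next
    case PInf then show False using hl[of 0] by simp
  next
    case MInf then show False using proper unfolding proper_fun_def by simp
  qed
qed

lemma conj_max:
  fixes h w :: "'a::euclidean_space \<Rightarrow> ereal"
  assumes closed: "closed_fun h" and proper: "proper_fun h" and bdd: "bounded (edom h)"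
    and wnn: "\<And>x. w x \<ge> 0" and wcl: "closed_fun w"
    and wmax: "\<exists>M::real. \<forall>x\<in>edom h. w x \<le> ereal M" and \<alpha>: "\<alpha> > 0"
  shows "\<exists>xu\<in>edom h. \<forall>x. ereal (u \<bullet> x) - (h x + ereal \<alpha> * w x)
            \<le> ereal (u \<bullet> xu) - (h xu + ereal \<alpha> * w xu)"
proof -
  obtain m where m: "\<And>x. ereal m \<le> h x" using h_bdd_below[OF closed proper bdd] by blast
  obtain M where M: "\<And>x. x \<in> edom h \<Longrightarrow> w x \<le> ereal M" using wmax by blast
  obtain B where B: "\<And>x. x \<in> edom h \<Longrightarrow> norm x \<le> B" using bdd unfolding bounded_iff by blast
  define hr where "hr x = real_of_ereal (h x)" for x
  define wr where "wr x = real_of_ereal (w x)" for x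
  have rep: "h x = ereal (hr x) \<and> w x = ereal (wr x) \<and> m \<le> hr x \<and> 0 \<le> wr x \<and> wr x \<le> M \<and> norm x \<le> B"
    if x: "x \<in> edom h" for x
  proof -
    have "h x < \<infinity>" using x by (simp add: edom_def)
    moreover have "ereal m \<le> h x" by (rule m)
    ultimately obtain r where r: "h x = ereal r" by (cases "h x") auto
    have "w x \<le> ereal M" using M[OF x] .
    moreover have "0 \<le> w x" by (rule wnn)
    ultimately obtain q where q: "w x = ereal q" by (cases "w x") auto
    show ?thesis using r q m[of x] M[OF x] wnn[of x] B[OF x] unfolding hr_def wr_def by auto
  qed
  have off: "h x = \<infinity>" if "x \<notin> edom h" for x using that by (simp add: edom_def)
  define G where "G x = u \<bullet> x - hr x - \<alpha> * wr x" for x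
  have eqG: "ereal (u \<bullet> x) - (h x + ereal \<alpha> * w x) = ereal (G x)" if "x \<in> edom h" for x
    using rep[OF that] unfolding G_def by simp
  have offG: "ereal (u \<bullet> x) - (h x + ereal \<alpha> * w x) = - \<infinity>" if "x \<notin> edom h" for x
  proof -
    have "ereal \<alpha> * w x \<ge> 0" using wnn[of x] \<alpha> by simp
    then have e: "h x + ereal \<alpha> * w x = \<infinity>" using off[OF that] by auto
    show ?thesis unfolding e by simp
  qed
  obtain x0 where x0: "x0 \<in> edom h" using proper unfolding proper_fun_def edom_def by blast
  define C where "C = norm u * B - G x0"
  define K where "K = {p. h (fst p) \<le> ereal (fst (snd p)) \<and> w (fst p) \<le> ereal (snd (snd p))}
      \<inter> (cball 0 B \<times> ({m..C} \<times> {0..M}))"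
  have Kmem: "(x, hr x, wr x) \<in> K" if x: "x \<in> edom h" and Gx: "G x0 \<le> G x" for x
  proof -
    have "u \<bullet> x \<le> norm u * norm x" by (simp add: norm_cauchy_schwarz)
    also have "\<dots> \<le> norm u * B" using rep[OF x] by (intro mult_left_mono) auto
    finally have "u \<bullet> x \<le> norm u * B" .
    moreover have "\<alpha> * wr x \<ge> 0" using rep[OF x] \<alpha> by simp
    ultimately have "hr x \<le> C" using Gx unfolding C_def G_def by linarith
    then show ?thesis using rep[OF x] unfolding K_def by auto
  qed
  have Keq: "{p. h (fst p) \<le> ereal (fst (snd p)) \<and> w (fst p) \<le> ereal (snd (snd p))}
      = (\<lambda>p. (fst p, fst (snd p))) -` epigraph h \<inter> (\<lambda>p. (fst p, snd (snd p))) -` epigraph w"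
    by (auto simp: epi_mem)
  have "closed ((\<lambda>p::'a \<times> real \<times> real. (fst p, fst (snd p))) -` epigraph h)"
    using closed unfolding closed_fun_def by (intro continuous_closed_vimage) (auto intro!: continuous_intros)
  moreover have "closed ((\<lambda>p::'a \<times> real \<times> real. (fst p, snd (snd p))) -` epigraph w)"
    using wcl unfolding closed_fun_def by (intro continuous_closed_vimage) (auto intro!: continuous_intros)
  ultimately have "closed K" unfolding K_def Keq
    by (intro closed_Int closed_Times) auto
  moreover have "bounded K"
    by (rule bounded_subset[of "cball 0 B \<times> ({m..C} \<times> {0..M})"])
      (auto simp: K_def intro!: bounded_Times)
  ultimately have cK: "compact K" by (simp add: compact_eq_bounded_closed)
  have "K \<noteq> {}" using Kmem[OF x0] by auto
  moreover have "continuous_on K (\<lambda>p. u \<bullet> fst p - fst (snd p) - \<alpha> * snd (snd p))"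
    by (auto intro!: continuous_intros)
  ultimately have "\<exists>x\<in>K. \<forall>y\<in>K. u \<bullet> fst y - fst (snd y) - \<alpha> * snd (snd y)
                     \<le> u \<bullet> fst x - fst (snd x) - \<alpha> * snd (snd x)"
    by (rule continuous_attains_sup[OF cK])
  then obtain ps where ps: "ps \<in> K"
    and psmax0: "\<forall>q\<in>K. u \<bullet> fst q - fst (snd q) - \<alpha> * snd (snd q) \<le> u \<bullet> fst ps - fst (snd ps) - \<alpha> * snd (snd ps)"
    by blast
  have psmax: "u \<bullet> fst q - fst (snd q) - \<alpha> * snd (snd q) \<le> u \<bullet> fst ps - fst (snd ps) - \<alpha> * snd (snd ps)"
    if "q \<in> K" for q using psmax0 that by blast
  define xs where "xs = fst ps"
  have "h xs \<le> ereal (fst (snd ps))" using ps unfolding K_def xs_def by auto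
  then have xs: "xs \<in> edom h" by (auto simp: edom_def)
  have "h xs \<le> ereal (fst (snd ps))" "w xs \<le> ereal (snd (snd ps))" using ps unfolding K_def xs_def by auto
  then have "hr xs \<le> fst (snd ps)" "wr xs \<le> snd (snd ps)" using rep[OF xs] by auto
  then have Gxs: "u \<bullet> fst ps - fst (snd ps) - \<alpha> * snd (snd ps) \<le> G xs"
    unfolding G_def xs_def using \<alpha> by (smt (verit) mult_left_mono)
  have Gle: "G x \<le> G xs" if x: "x \<in> edom h" for x
  proof -
    have *: "G y \<le> G xs" if y: "y \<in> edom h" "G x0 \<le> G y" for y
      using psmax[OF Kmem[OF y]] Gxs unfolding G_def by simp
    show ?thesis
    proof (cases "G x0 \<le> G x")
      case True then show ?thesis using * x by blast
    next
      case False then show ?thesis using *[OF x0] by simp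
    qed
  qed
  show ?thesis
  proof (intro bexI[OF _ xs] allI)
    fix x
    show "ereal (u \<bullet> x) - (h x + ereal \<alpha> * w x) \<le> ereal (u \<bullet> xs) - (h xs + ereal \<alpha> * w xs)"
    proof (cases "x \<in> edom h")
      case True then show ?thesis using eqG[OF True] eqG[OF xs] Gle[OF True] by simp
    next
      case False then show ?thesis using offG[OF False] by simp
    qed
  qed
qed



lemma domrep:
  fixes h w :: "'a \<Rightarrow> ereal"
  assumes proper: "proper_fun h" and wnn: "\<And>x. w x \<ge> 0" and M: "\<forall>x\<in>edom h. w x \<le> ereal M"
    and x: "x \<in> edom h"
  shows "h x = ereal (real_of_ereal (h x))" "w x = ereal (real_of_ereal (w x))" "0 \<le> real_of_ereal (w x)"
proof -
  have "h x < \<infinity>" using x by (simp add: edom_def)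
  moreover have "h x \<noteq> -\<infinity>" using proper unfolding proper_fun_def by blast
  ultimately show "h x = ereal (real_of_ereal (h x))" by (cases "h x") auto
  have "w x \<le> ereal M" using M x by blast
  moreover have "0 \<le> w x" by (rule wnn)
  ultimately show "w x = ereal (real_of_ereal (w x))" "0 \<le> real_of_ereal (w x)" by (cases "w x"; auto)+
qed

lemma convcomb:
  fixes h w :: "'a::real_normed_vector \<Rightarrow> ereal"
  assumes h_convex: "convex_fun h" and w_sc: "strongly_convex_on (edom h) 1 N w"
    and proper: "proper_fun h" and wnn: "\<And>x. w x \<ge> 0" and M: "\<forall>x\<in>edom h. w x \<le> ereal M"
    and x: "x \<in> edom h" and y: "y \<in> edom h" and t: "0 \<le> t" "t \<le> 1"
  shows "t *\<^sub>R x + (1 - t) *\<^sub>R y \<in> edom h"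
    "real_of_ereal (h (t *\<^sub>R x + (1 - t) *\<^sub>R y)) \<le> t * real_of_ereal (h x) + (1 - t) * real_of_ereal (h y)"
    "real_of_ereal (w (t *\<^sub>R x + (1 - t) *\<^sub>R y)) \<le> t * real_of_ereal (w x) + (1 - t) * real_of_ereal (w y)
        - 1 / 2 * t * (1 - t) * (N (x - y))\<^sup>2"
proof -
  note rx = domrep[OF proper wnn M x] and ry = domrep[OF proper wnn M y]
  have "(x, real_of_ereal (h x)) \<in> epigraph h" using rx by (simp add: epi_mem)
  moreover have "(y, real_of_ereal (h y)) \<in> epigraph h" using ry by (simp add: epi_mem)
  ultimately have "t *\<^sub>R (x, real_of_ereal (h x)) + (1 - t) *\<^sub>R (y, real_of_ereal (h y)) \<in> epigraph h"
    using h_convex t unfolding convex_fun_def by (intro convexD) auto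
  then have hle: "h (t *\<^sub>R x + (1 - t) *\<^sub>R y) \<le> ereal (t * real_of_ereal (h x) + (1 - t) * real_of_ereal (h y))"
    by (simp add: epi_mem)
  then show xt: "t *\<^sub>R x + (1 - t) *\<^sub>R y \<in> edom h" by (auto simp: edom_def)
  note rxt = domrep[OF proper wnn M xt]
  show "real_of_ereal (h (t *\<^sub>R x + (1 - t) *\<^sub>R y)) \<le> t * real_of_ereal (h x) + (1 - t) * real_of_ereal (h y)"
    using hle rxt(1) by (metis ereal_less_eq(3))
  have "w (t *\<^sub>R x + (1 - t) *\<^sub>R y) \<le> ereal t * w x + ereal (1 - t) * w y - ereal (1 / 2 * t * (1 - t) * (N (x - y))\<^sup>2)"
    using w_sc x y t unfolding strongly_convex_on_def by auto
  also have "\<dots> = ereal (t * real_of_ereal (w x) + (1 - t) * real_of_ereal (w y) - 1 / 2 * t * (1 - t) * (N (x - y))\<^sup>2)"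
    by (subst rx(2), subst ry(2)) simp
  finally show "real_of_ereal (w (t *\<^sub>R x + (1 - t) *\<^sub>R y)) \<le> t * real_of_ereal (w x) + (1 - t) * real_of_ereal (w y)
        - 1 / 2 * t * (1 - t) * (N (x - y))\<^sup>2"
    using rxt(2) by (metis ereal_less_eq(3))
qed

lemma gH_ident:
  fixes F :: "'a::real_inner \<Rightarrow> real"
  assumes D: "(F has_derivative (\<lambda>d. g \<bullet> d)) (at u)"
    and low: "\<And>v. v \<bullet> a - c \<le> F v" and eq: "F u = u \<bullet> a - c"
  shows "g = a"
proof -
  have D2: "((\<lambda>v. F v - v \<bullet> a) has_derivative (\<lambda>d. g \<bullet> d - d \<bullet> a)) (at u)"
    by (rule has_derivative_diff[OF D]) (auto intro!: derivative_eq_intros)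
  have "eventually (\<lambda>v. F u - u \<bullet> a \<le> F v - v \<bullet> a) (at u)"
    using low eq by (intro always_eventually) (smt (verit))
  from has_derivative_local_min[OF D2 this] have "(\<lambda>d. g \<bullet> d - d \<bullet> a) = (\<lambda>d. 0)" .
  then have "g \<bullet> (g - a) - (g - a) \<bullet> a = 0" by metis
  then have "(g - a) \<bullet> (g - a) = 0" by (simp add: inner_diff_left inner_diff_right inner_commute)
  then show ?thesis by simp
qed

lemma ereal_H_eq:
  assumes "h x = ereal a" "w x = ereal b"
  shows "ereal (u \<bullet> x) - (h x + ereal \<alpha> * w x) = ereal (u \<bullet> x - (a + \<alpha> * b))"
  using assms by simp

lemma qgrowth:
  fixes h w :: "'a::real_inner \<Rightarrow> ereal"
  assumes h_convex: "convex_fun h" and w_sc: "strongly_convex_on (edom h) 1 N w"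
    and proper: "proper_fun h" and wnn: "\<And>x. w x \<ge> 0" and M: "\<forall>x\<in>edom h. w x \<le> ereal M"
    and \<alpha>: "\<alpha> > 0"
    and xu: "xu \<in> edom h"
    and max: "\<And>x. ereal (u \<bullet> x) - (h x + ereal \<alpha> * w x) \<le> ereal (u \<bullet> xu) - (h xu + ereal \<alpha> * w xu)"
    and x: "x \<in> edom h"
  shows "real_of_ereal (h xu) + \<alpha> * real_of_ereal (w xu) + u \<bullet> (x - xu) + \<alpha> / 2 * (N (x - xu))\<^sup>2
          \<le> real_of_ereal (h x) + \<alpha> * real_of_ereal (w x)"
proof -
  define hr where "hr z = real_of_ereal (h z)" for z
  define wr where "wr z = real_of_ereal (w z)" for z
  define Hr where "Hr z = hr z + \<alpha> * wr z" for z
  define c where "c = \<alpha> / 2 * (N (x - xu))\<^sup>2"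
  define D where "D = Hr x - Hr xu - u \<bullet> (x - xu)"
  have c0: "c \<ge> 0" unfolding c_def using \<alpha> by simp
  have maxr: "u \<bullet> z - Hr z \<le> u \<bullet> xu - Hr xu" if z: "z \<in> edom h" for z
  proof -
    note rz = domrep[OF proper wnn M z] and ru = domrep[OF proper wnn M xu]
    have "ereal (u \<bullet> z - (hr z + \<alpha> * wr z)) \<le> ereal (u \<bullet> xu - (hr xu + \<alpha> * wr xu))"
      using max[of z] ereal_H_eq[where h=h and w=w and u=u and \<alpha>=\<alpha>, OF rz(1,2)] ereal_H_eq[where h=h and w=w and u=u and \<alpha>=\<alpha>, OF ru(1,2)]
      unfolding hr_def wr_def by simp
    then show ?thesis unfolding Hr_def by simp
  qed
  have step: "c * (1 - t) \<le> D" if t: "0 < t" "t < 1" for t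
  proof -
    define xt where "xt = t *\<^sub>R x + (1 - t) *\<^sub>R xu"
    note cc = convcomb[OF h_convex w_sc proper wnn M x xu, of t]
    have xt: "xt \<in> edom h" using cc t unfolding xt_def by auto
    have "hr xt \<le> t * hr x + (1 - t) * hr xu" using cc t unfolding xt_def hr_def by auto
    moreover have "wr xt \<le> t * wr x + (1 - t) * wr xu - 1 / 2 * t * (1 - t) * (N (x - xu))\<^sup>2"
      using cc t unfolding xt_def wr_def by auto
    moreover have "\<alpha> * wr xt \<le> \<alpha> * (t * wr x + (1 - t) * wr xu - 1 / 2 * t * (1 - t) * (N (x - xu))\<^sup>2)"
      if "wr xt \<le> t * wr x + (1 - t) * wr xu - 1 / 2 * t * (1 - t) * (N (x - xu))\<^sup>2"
      using that \<alpha> by (intro mult_left_mono) auto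
    ultimately have "Hr xt \<le> (t * hr x + (1 - t) * hr xu) + \<alpha> * (t * wr x + (1 - t) * wr xu - 1 / 2 * t * (1 - t) * (N (x - xu))\<^sup>2)"
      unfolding Hr_def by linarith
    also have "\<dots> = t * Hr x + (1 - t) * Hr xu - t * (1 - t) * c"
      unfolding Hr_def c_def by (simp add: algebra_simps)
    finally have Hxt: "Hr xt \<le> t * Hr x + (1 - t) * Hr xu - t * (1 - t) * c" .
    have ux: "u \<bullet> xt = t * (u \<bullet> x) + (1 - t) * (u \<bullet> xu)"
      unfolding xt_def by (simp add: inner_add_right)
    have "u \<bullet> xt - Hr xt \<le> u \<bullet> xu - Hr xu" by (rule maxr[OF xt])
    then have "t * (c * (1 - t)) \<le> t * D"
      using Hxt ux unfolding D_def by (simp add: inner_diff_right algebra_simps)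
    then show ?thesis using t by simp
  qed
  have "c \<le> D"
  proof (rule field_le_epsilon)
    fix e :: real assume e: "0 < e"
    define t where "t = min (1 / 2) (e / (c + 1))"
    have t0: "0 < t" "t < 1" unfolding t_def using e c0 by auto
    have "c * t \<le> c * (e / (c + 1))" using c0 unfolding t_def by (intro mult_left_mono) auto
    also have "\<dots> \<le> e" using c0 e by (simp add: field_simps)
    finally have "c * t \<le> e" .
    then show "c \<le> D + e" using step[OF t0] by (simp add: algebra_simps)
  qed
  then show ?thesis unfolding c_def D_def Hr_def hr_def wr_def by simp
qed



lemma descent:
  fixes f :: "'a::euclidean_space \<Rightarrow> real" and N :: "'a \<Rightarrow> real"
  assumes N: "is_norm N"
    and f_grad: "\<And>x. (f has_derivative (\<lambda>v. gradf x \<bullet> v)) (at x)"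
    and f_smooth: "\<And>x x'. dual_norm N (gradf x - gradf x') \<le> L * N (x - x')"
  shows "f (y + v) \<le> f y + gradf y \<bullet> v + L / 2 * (N v)\<^sup>2"
proof -
  define \<phi> where "\<phi> t = f (y + t *\<^sub>R v) - t * (gradf y \<bullet> v) - L / 2 * t\<^sup>2 * (N v)\<^sup>2" for t
  have D: "DERIV \<phi> t :> gradf (y + t *\<^sub>R v) \<bullet> v - gradf y \<bullet> v - L * t * (N v)\<^sup>2" for t
  proof -
    have "((\<lambda>t. f (y + t *\<^sub>R v)) has_derivative (\<lambda>s. gradf (y + t *\<^sub>R v) \<bullet> (s *\<^sub>R v))) (at t)"
      by (rule has_derivative_compose[OF _ f_grad, where f="\<lambda>t. y + t *\<^sub>R v", unfolded o_def])
        (auto intro!: derivative_eq_intros)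
    then have "((\<lambda>t. f (y + t *\<^sub>R v)) has_field_derivative (gradf (y + t *\<^sub>R v) \<bullet> v)) (at t)"
      unfolding has_field_derivative_def by (rule has_derivative_eq_rhs) (simp add: fun_eq_iff)
    then show ?thesis unfolding \<phi>_def
      by (auto intro!: derivative_eq_intros)
  qed
  have "\<phi> 1 \<le> \<phi> 0"
  proof (rule DERIV_nonpos_imp_nonincreasing[of 0 1 \<phi>])
    fix t :: real assume t: "0 \<le> t" "t \<le> 1"
    have "(gradf (y + t *\<^sub>R v) - gradf y) \<bullet> v \<le> L * t * (N v)\<^sup>2"
    proof (cases "t = 0")
      case True then show ?thesis by simp
    next
      case False
      then have tp: "t > 0" using t by simp
      have "(gradf (y + t *\<^sub>R v) - gradf y) \<bullet> (t *\<^sub>R v)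
            \<le> dual_norm N (gradf (y + t *\<^sub>R v) - gradf y) * N (t *\<^sub>R v)" by (rule dual_pair[OF N])
      also have "\<dots> \<le> (L * N (t *\<^sub>R v)) * N (t *\<^sub>R v)"
        using f_smooth[of "y + t *\<^sub>R v" y] isn_basic(3)[OF N, where x="t *\<^sub>R v"]
        by (intro mult_right_mono) auto
      also have "\<dots> = t * (L * t * (N v)\<^sup>2)"
        using isn_basic(5)[OF N, where c=t and x=v] tp by (simp add: power2_eq_square)
      finally have "t * ((gradf (y + t *\<^sub>R v) - gradf y) \<bullet> v) \<le> t * (L * t * (N v)\<^sup>2)"
        by simp
      then show ?thesis using tp by simp
    qed
    then show "\<exists>y. DERIV \<phi> t :> y \<and> y \<le> 0" using D[of t]
      by (intro exI[of _ "gradf (y + t *\<^sub>R v) \<bullet> v - gradf y \<bullet> v - L * t * (N v)\<^sup>2"])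
        (simp add: inner_diff_left)
  qed simp
  then show ?thesis unfolding \<phi>_def by simp
qed

lemma grad_ineq:
  fixes f :: "'a::euclidean_space \<Rightarrow> real"
  assumes f_convex: "convex_on UNIV f"
    and f_grad: "\<And>x. (f has_derivative (\<lambda>v. gradf x \<bullet> v)) (at x)"
  shows "f x + gradf x \<bullet> (y - x) \<le> f y"
proof -
  define g where "g t = f (x + t *\<^sub>R (y - x))" for t
  have gc: "convex_on UNIV g"
  proof (rule convex_onI)
    fix t a b :: real
    assume t: "0 < t" "t < 1"
    have eq: "x + ((1 - t) *\<^sub>R a + t *\<^sub>R b) *\<^sub>R (y - x) = (1 - t) *\<^sub>R (x + a *\<^sub>R (y - x)) + t *\<^sub>R (x + b *\<^sub>R (y - x))"
      by (simp add: algebra_simps)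
    show "g ((1 - t) *\<^sub>R a + t *\<^sub>R b) \<le> (1 - t) * g a + t * g b"
      unfolding g_def eq using convex_onD[OF f_convex, of t] t by simp
  qed simp
  have "((\<lambda>t. f (x + t *\<^sub>R (y - x))) has_derivative (\<lambda>s. gradf (x + 0 *\<^sub>R (y - x)) \<bullet> (s *\<^sub>R (y - x)))) (at 0)"
    by (rule has_derivative_compose[OF _ f_grad, where f="\<lambda>t. x + t *\<^sub>R (y - x)", unfolded o_def])
      (auto intro!: derivative_eq_intros)
  then have "(g has_field_derivative (gradf x \<bullet> (y - x))) (at 0 within UNIV)"
    unfolding g_def has_field_derivative_def by (rule has_derivative_eq_rhs) (simp add: fun_eq_iff)
  from convex_on_imp_above_tangent[OF gc _ _ _ this, of 1] have "g 1 - g 0 \<ge> gradf x \<bullet> (y - x) * (1 - 0)"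
    by simp
  then show ?thesis unfolding g_def by simp
qed



theorem propositionB4:
  fixes N :: "real^'n \<Rightarrow> real"
    and f :: "real^'n \<Rightarrow> real" and gradf :: "real^'n \<Rightarrow> real^'n"
    and h w :: "real^'n \<Rightarrow> ereal"
    and L \<alpha> \<eta> :: real
    and gH :: "real^'n \<Rightarrow> real^'n"
    and z zbar y :: "nat \<Rightarrow> real^'n"
  assumes N: "is_norm N"
    and L: "L > 0"
    and f_convex: "convex_on UNIV f"
    and f_grad: "\<And>x. (f has_derivative (\<lambda>v. gradf x \<bullet> v)) (at x)"
    and f_smooth: "\<And>x x'. dual_norm N (gradf x - gradf x') \<le> L * N (x - x')"
    and h_closed: "closed_fun h" and h_proper: "proper_fun h" and h_convex: "convex_fun h"
    and h_bdd: "bounded (edom h)"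
    and w_nonneg: "\<And>x. w x \<ge> 0"
    and w_closed: "closed_fun w"
    and w_sc: "strongly_convex_on (edom h) 1 N w"
    and w_max: "\<exists>M::real. \<forall>x\<in>edom h. w x \<le> ereal M"
    and \<alpha>: "\<alpha> > 0"
    and \<eta>: "\<eta> = \<alpha> / (L + \<alpha>)"
    and gH: "\<And>u. ((\<lambda>u. real_of_ereal (conj (\<lambda>x. h x + ereal \<alpha> * w x) u))
                     has_derivative (\<lambda>v. gH u \<bullet> v)) (at u)"
    and z0: "conj (\<lambda>x. ereal (f x)) (z 0) < \<infinity>"
    and zbar: "\<And>k v. ereal (- gH (- z k) \<bullet> zbar k) + conj (\<lambda>x. ereal (f x)) (zbar k)
                     \<le> ereal (- gH (- z k) \<bullet> v) + conj (\<lambda>x. ereal (f x)) v"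
    and z_step: "\<And>k. z (Suc k) = \<eta> *\<^sub>R zbar k + (1 - \<eta>) *\<^sub>R z k"
    and y0: "y 0 = gH (- z 0)"
    and y_step: "\<And>k. y (Suc k) = (1 - \<eta>) *\<^sub>R y k + \<eta> *\<^sub>R gH (- z k)"
  shows "\<And>k. conj (\<lambda>x. h x + ereal \<alpha> * w x) (- z k) + conj (\<lambda>x. ereal (f x)) (z k)
              + (ereal (f (y k)) + (h (y k) + ereal \<alpha> * w (y k)))
           \<le> (conj (\<lambda>x. h x + ereal \<alpha> * w x) (- z 0) + conj (\<lambda>x. ereal (f x)) (z 0)
              + (ereal (f (y 0)) + (h (y 0) + ereal \<alpha> * w (y 0))))
             / ereal ((1 + \<alpha> / L) ^ k)"
proof -
  obtain M where M: "\<forall>x\<in>edom h. w x \<le> ereal M" using w_max by blast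
  define Hc where "Hc = conj (\<lambda>x. h x + ereal \<alpha> * w x)"
  define Fc where "Fc = conj (\<lambda>x. ereal (f x))"
  define hr where "hr x = real_of_ereal (h x)" for x
  define wr where "wr x = real_of_ereal (w x)" for x
  define Hr where "Hr x = hr x + \<alpha> * wr x" for x
  define Hs where "Hs u = real_of_ereal (Hc u)" for u
  define Fs where "Fs u = real_of_ereal (Fc u)" for u
  have \<eta>01: "0 < \<eta>" "\<eta> < 1" unfolding \<eta> using \<alpha> L by (simp_all add: divide_less_eq)
  have Hdom: "h x + ereal \<alpha> * w x = ereal (Hr x)" if "x \<in> edom h" for x
    using domrep[OF h_proper w_nonneg M that] unfolding Hr_def hr_def wr_def
    by (metis plus_ereal.simps(1) times_ereal.simps(1))
  have pre: "\<exists>xu\<in>edom h. Hc u = ereal (u \<bullet> xu - Hr xu) \<and>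
      (\<forall>x. ereal (u \<bullet> x) - (h x + ereal \<alpha> * w x) \<le> ereal (u \<bullet> xu - Hr xu))" for u
  proof -
    obtain xu where xu: "xu \<in> edom h"
      and mx: "\<And>x. ereal (u \<bullet> x) - (h x + ereal \<alpha> * w x) \<le> ereal (u \<bullet> xu) - (h xu + ereal \<alpha> * w xu)"
      using conj_max[OF h_closed h_proper h_bdd w_nonneg w_closed w_max \<alpha>, of u] by blast
    have e: "ereal (u \<bullet> xu) - (h xu + ereal \<alpha> * w xu) = ereal (u \<bullet> xu - Hr xu)"
      using Hdom[OF xu] by simp
    have "Hc u = ereal (u \<bullet> xu - Hr xu)"
    proof (rule antisym)
      show "Hc u \<le> ereal (u \<bullet> xu - Hr xu)" unfolding Hc_def conj_def
        using mx e by (intro SUP_least) auto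
      show "ereal (u \<bullet> xu - Hr xu) \<le> Hc u" unfolding Hc_def conj_def
        using e by (metis (no_types, lifting) SUP_upper UNIV_I)
    qed
    then show ?thesis using xu mx e by auto
  qed
  have Hc_low: "ereal (v \<bullet> x - Hr x) \<le> Hc v" if "x \<in> edom h" for v x
  proof -
    have "ereal (v \<bullet> x) - (h x + ereal \<alpha> * w x) = ereal (v \<bullet> x - Hr x)" using Hdom[OF that] by simp
    then show ?thesis unfolding Hc_def conj_def by (metis (no_types, lifting) SUP_upper UNIV_I)
  qed
  have Hc_fin: "Hc v = ereal (Hs v)" for v
    using pre[of v] unfolding Hs_def by auto
  have HC: "gH u \<in> edom h \<and> Hs u = u \<bullet> gH u - Hr (gH u) \<and>
      (\<forall>x. ereal (u \<bullet> x) - (h x + ereal \<alpha> * w x) \<le> ereal (u \<bullet> gH u - Hr (gH u)))" for u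
  proof -
    obtain xu where xu: "xu \<in> edom h" and e: "Hc u = ereal (u \<bullet> xu - Hr xu)"
      and mx: "\<forall>x. ereal (u \<bullet> x) - (h x + ereal \<alpha> * w x) \<le> ereal (u \<bullet> xu - Hr xu)"
      using pre[of u] by blast
    have "gH u = xu"
    proof (rule gH_ident[where F=Hs and c="Hr xu"])
      show "(Hs has_derivative (\<lambda>d. gH u \<bullet> d)) (at u)"
        using gH[of u] unfolding Hs_def Hc_def by simp
      show "v \<bullet> xu - Hr xu \<le> Hs v" for v using Hc_low[OF xu, of v] Hc_fin[of v] by simp
      show "Hs u = u \<bullet> xu - Hr xu" using e unfolding Hs_def by simp
    qed
    then show ?thesis using xu e mx unfolding Hs_def by simp
  qed
  have Fc_low: "ereal (v \<bullet> yy - f yy) \<le> Fc v" for v yy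
  proof -
    have "ereal (v \<bullet> yy) - ereal (f yy) = ereal (v \<bullet> yy - f yy)" by simp
    then show ?thesis unfolding Fc_def conj_def by (metis (no_types, lifting) SUP_upper UNIV_I)
  qed
  have Fc_up: "Fc v \<le> ereal R" if "\<And>yy. v \<bullet> yy - f yy \<le> R" for v R
    unfolding Fc_def conj_def using that by (intro SUP_least) simp
  have Fc_fin: "Fc v = ereal (Fs v)" if "Fc v < \<infinity>" for v
  proof -
    have "Fc v \<noteq> -\<infinity>" using Fc_low[of v 0] by auto
    then show ?thesis using that unfolding Fs_def by (cases "Fc v") auto
  qed
  have Fc_grad: "Fc (gradf x) \<le> ereal (gradf x \<bullet> x - f x)" for x
  proof (rule Fc_up)
    fix yy
    have "f x + gradf x \<bullet> (yy - x) \<le> f yy" by (rule grad_ineq[OF f_convex f_grad])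
    then show "gradf x \<bullet> yy - f yy \<le> gradf x \<bullet> x - f x" by (simp add: inner_diff_right)
  qed
  define gap where "gap k = Hs (- z k) + Fs (z k) + f (y k) + Hr (y k)" for k
  have onestep: "Fc (z (Suc k)) < \<infinity> \<and> y (Suc k) \<in> edom h \<and> gap (Suc k) \<le> (1 - \<eta>) * gap k"
    if Fk: "Fc (z k) < \<infinity>" and Yk: "y k \<in> edom h" for k
  proof -
    define zz where "zz = z k"
    define zb where "zb = zbar k"
    define x where "x = gH (- zz)"
    define x' where "x' = gH (- z (Suc k))"
    define v where "v = x' - x"
    define n where "n = N v"
    have zs: "z (Suc k) = \<eta> *\<^sub>R zb + (1 - \<eta>) *\<^sub>R zz" unfolding zb_def zz_def by (rule z_step)
    note HCx = HC[of "- zz", folded x_def]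
    note HCx' = HC[of "- z (Suc k)", folded x'_def]
    have Fz: "Fc zz = ereal (Fs zz)" using Fc_fin Fk unfolding zz_def by blast
    have zb1: "ereal (- (x \<bullet> zb)) + Fc zb \<le> ereal (- (x \<bullet> gradf x)) + Fc (gradf x)"
      using zbar[of k "gradf x"] unfolding x_def zb_def zz_def Fc_def by simp
    also have "\<dots> \<le> ereal (- (x \<bullet> gradf x)) + ereal (gradf x \<bullet> x - f x)"
      using Fc_grad[of x] by (intro add_left_mono)
    also have "\<dots> = ereal (- f x)" by (simp add: inner_commute)
    finally have zb2: "ereal (- (x \<bullet> zb)) + Fc zb \<le> ereal (- f x)" .
    then have "Fc zb < \<infinity>" by auto
    then have Fzb: "Fc zb = ereal (Fs zb)" by (rule Fc_fin)
    have Fszb: "Fs zb \<le> x \<bullet> zb - f x" using zb2 unfolding Fzb by simp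
    have Lane: "L + \<alpha> \<noteq> 0" using L \<alpha> by simp
    have e0: "\<eta> * (L + \<alpha>) = \<alpha>" unfolding \<eta> using Lane by simp
    have e1: "(1 - \<eta>) * (\<alpha> / L) = \<eta>"
    proof -
      have "(1 - \<eta>) * \<alpha> = \<eta> * L" using e0 by (simp add: algebra_simps)
      then show ?thesis using L by (simp add: field_simps)
    qed
    have e2: "\<eta> * (L / 2) + (1 - \<eta>) * (L / 2) * (\<alpha> / L)\<^sup>2 = \<alpha> / 2"
    proof -
      have "(1 - \<eta>) * (L / 2) * (\<alpha> / L)\<^sup>2 = ((1 - \<eta>) * (\<alpha> / L)) * (\<alpha> / 2)"
        using L by (simp add: power2_eq_square field_simps)
      also have "\<dots> = \<eta> * (\<alpha> / 2)" unfolding e1 ..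
      finally show ?thesis using e0 by (simp add: algebra_simps)
    qed
    have Bb: "z (Suc k) \<bullet> yy - f yy \<le> \<eta> * Fs zb + (1 - \<eta>) * Fs zz + \<eta> * (zb \<bullet> v - zz \<bullet> v) + \<alpha> / 2 * n\<^sup>2"
      for yy
    proof -
      define g where "g = gradf yy"
      define r where "r = \<alpha> / L"
      have r0: "r \<ge> 0" unfolding r_def using \<alpha> L by simp
      have d1: "f (yy + - v) \<le> f yy + g \<bullet> (- v) + L / 2 * (N (- v))\<^sup>2"
        unfolding g_def by (rule descent[OF N f_grad f_smooth])
      have d2: "f (yy + r *\<^sub>R v) \<le> f yy + g \<bullet> (r *\<^sub>R v) + L / 2 * (N (r *\<^sub>R v))\<^sup>2"
        unfolding g_def by (rule descent[OF N f_grad f_smooth])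
      have Nm: "N (- v) = n" unfolding n_def using isn_basic(2)[OF N] by simp
      have Nr: "N (r *\<^sub>R v) = r * n" unfolding n_def using isn_basic(5)[OF N, where c=r and x=v] r0 by simp
      have c1: "zb \<bullet> (yy + - v) - f (yy + - v) \<le> Fs zb" using Fc_low[of zb "yy + - v"] Fzb by simp
      have c2: "zz \<bullet> (yy + r *\<^sub>R v) - f (yy + r *\<^sub>R v) \<le> Fs zz" using Fc_low[of zz "yy + r *\<^sub>R v"] Fz by simp
      have d1': "f (yy - v) \<le> f yy - g \<bullet> v + L / 2 * n\<^sup>2" using d1 Nm by simp
      have c1': "zb \<bullet> yy - zb \<bullet> v - f (yy - v) \<le> Fs zb" using c1 by (simp add: inner_diff_right)
      have I1: "zb \<bullet> yy - zb \<bullet> v - f yy + g \<bullet> v - L / 2 * n\<^sup>2 \<le> Fs zb"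
        using c1' d1' by linarith
      have d2': "f (yy + r *\<^sub>R v) \<le> f yy + r * (g \<bullet> v) + L / 2 * r\<^sup>2 * n\<^sup>2"
        using d2 Nr by (simp add: power_mult_distrib)
      have c2': "zz \<bullet> yy + r * (zz \<bullet> v) - f (yy + r *\<^sub>R v) \<le> Fs zz" using c2 by (simp add: inner_add_right)
      have I2: "zz \<bullet> yy + r * (zz \<bullet> v) - f yy - r * (g \<bullet> v) - L / 2 * r\<^sup>2 * n\<^sup>2 \<le> Fs zz"
        using c2' d2' by linarith
      have I1': "\<eta> * (zb \<bullet> yy - zb \<bullet> v - f yy + g \<bullet> v - L / 2 * n\<^sup>2) \<le> \<eta> * Fs zb"
        using I1 \<eta>01 by (intro mult_left_mono) auto
      have I2': "(1 - \<eta>) * (zz \<bullet> yy + r * (zz \<bullet> v) - f yy - r * (g \<bullet> v) - L / 2 * r\<^sup>2 * n\<^sup>2) \<le> (1 - \<eta>) * Fs zz"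
        using I2 \<eta>01 by (intro mult_left_mono) auto
      have "\<eta> * (zb \<bullet> yy - zb \<bullet> v - f yy + g \<bullet> v - L / 2 * n\<^sup>2)
          + (1 - \<eta>) * (zz \<bullet> yy + r * (zz \<bullet> v) - f yy - r * (g \<bullet> v) - L / 2 * r\<^sup>2 * n\<^sup>2)
          = \<eta> * (zb \<bullet> yy) + (1 - \<eta>) * (zz \<bullet> yy) - f yy - \<eta> * (zb \<bullet> v)
            + ((1 - \<eta>) * r) * (zz \<bullet> v) + \<eta> * (g \<bullet> v) - ((1 - \<eta>) * r) * (g \<bullet> v)
            - (\<eta> * (L / 2) + (1 - \<eta>) * (L / 2) * r\<^sup>2) * n\<^sup>2"
        by (simp add: algebra_simps)
      also have "\<dots> = \<eta> * (zb \<bullet> yy) + (1 - \<eta>) * (zz \<bullet> yy) - f yy - \<eta> * (zb \<bullet> v)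
            + \<eta> * (zz \<bullet> v) - \<alpha> / 2 * n\<^sup>2"
        unfolding r_def e1 e2 by simp
      finally have "\<eta> * (zb \<bullet> yy) + (1 - \<eta>) * (zz \<bullet> yy) - f yy - \<eta> * (zb \<bullet> v)
            + \<eta> * (zz \<bullet> v) - \<alpha> / 2 * n\<^sup>2 \<le> \<eta> * Fs zb + (1 - \<eta>) * Fs zz"
        using I1' I2' by linarith
      moreover have "z (Suc k) \<bullet> yy = \<eta> * (zb \<bullet> yy) + (1 - \<eta>) * (zz \<bullet> yy)"
        unfolding zs by (simp add: inner_add_left)
      ultimately show ?thesis by (simp add: algebra_simps)
    qed
    have Fz': "Fc (z (Suc k)) \<le> ereal (\<eta> * Fs zb + (1 - \<eta>) * Fs zz + \<eta> * (zb \<bullet> v - zz \<bullet> v) + \<alpha> / 2 * n\<^sup>2)"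
      by (rule Fc_up) (rule Bb)
    then have Fk': "Fc (z (Suc k)) < \<infinity>" by auto
    have Fs': "Fs (z (Suc k)) \<le> \<eta> * Fs zb + (1 - \<eta>) * Fs zz + \<eta> * (zb \<bullet> v - zz \<bullet> v) + \<alpha> / 2 * n\<^sup>2"
      using Fz' Fc_fin[OF Fk'] by simp
    have qg: "Hr x + (- zz) \<bullet> (x' - x) + \<alpha> / 2 * (N (x' - x))\<^sup>2 \<le> Hr x'"
    proof -
      have mx: "\<And>xx. ereal ((- zz) \<bullet> xx) - (h xx + ereal \<alpha> * w xx) \<le> ereal ((- zz) \<bullet> x) - (h x + ereal \<alpha> * w x)"
        using HCx Hdom[of x] by simp
      show ?thesis using qgrowth[OF h_convex w_sc h_proper w_nonneg M \<alpha> _ mx, of x'] HCx HCx'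
        unfolding Hr_def hr_def wr_def by simp
    qed
    have Hs': "Hs (- z (Suc k)) \<le> Hs (- zz) - \<eta> * (zb \<bullet> x - zz \<bullet> x) - \<eta> * (zb \<bullet> v - zz \<bullet> v) - \<alpha> / 2 * n\<^sup>2"
    proof -
      have "Hs (- z (Suc k)) = - (z (Suc k) \<bullet> x') - Hr x'" using HCx' by simp
      moreover have "Hs (- zz) = - (zz \<bullet> x) - Hr x" using HCx by simp
      moreover have "z (Suc k) \<bullet> x' = \<eta> * (zb \<bullet> x') + (1 - \<eta>) * (zz \<bullet> x')"
        unfolding zs by (simp add: inner_add_left)
      moreover have "x' = x + v" unfolding v_def by simp
      ultimately show ?thesis using qg unfolding n_def v_def[symmetric]
        by (simp add: inner_add_right inner_diff_right algebra_simps)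
    qed
    have ys: "y (Suc k) = (1 - \<eta>) *\<^sub>R y k + \<eta> *\<^sub>R x" unfolding x_def zz_def by (rule y_step)
    have fy': "f (y (Suc k)) \<le> (1 - \<eta>) * f (y k) + \<eta> * f x"
      unfolding ys using convex_onD[OF f_convex, of \<eta> "y k" x] \<eta>01 by simp
    note cc = convcomb[OF h_convex w_sc h_proper w_nonneg M Yk conjunct1[OF HCx], of "1 - \<eta>", folded x_def]
    have ys2: "(1 - \<eta>) *\<^sub>R y k + (1 - (1 - \<eta>)) *\<^sub>R x = y (Suc k)" unfolding ys by simp
    have Yk': "y (Suc k) \<in> edom h" using cc(1) \<eta>01 ys2 by simp
    have hy': "hr (y (Suc k)) \<le> (1 - \<eta>) * hr (y k) + \<eta> * hr x"
      using cc(2) \<eta>01 ys2 unfolding hr_def by simp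
    have "wr (y (Suc k)) \<le> (1 - \<eta>) * wr (y k) + \<eta> * wr x - 1 / 2 * (1 - \<eta>) * \<eta> * (N (y k - x))\<^sup>2"
      using cc(3) \<eta>01 ys2 unfolding wr_def by simp
    moreover have "0 \<le> 1 / 2 * (1 - \<eta>) * \<eta> * (N (y k - x))\<^sup>2" using \<eta>01 by simp
    ultimately have wy': "wr (y (Suc k)) \<le> (1 - \<eta>) * wr (y k) + \<eta> * wr x" by linarith
    have Hy': "Hr (y (Suc k)) \<le> (1 - \<eta>) * Hr (y k) + \<eta> * Hr x"
    proof -
      have "\<alpha> * wr (y (Suc k)) \<le> \<alpha> * ((1 - \<eta>) * wr (y k) + \<eta> * wr x)"
        using wy' \<alpha> by (intro mult_left_mono) auto
      then show ?thesis using hy' unfolding Hr_def by (simp add: algebra_simps)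
    qed
    have Hsx: "Hs (- zz) = - (zz \<bullet> x) - Hr x" using HCx by simp
    have "gap (Suc k) \<le> (1 - \<eta>) * gap k"
    proof -
      have "gap (Suc k) \<le> (Hs (- zz) - \<eta> * (zb \<bullet> x - zz \<bullet> x)) + (\<eta> * Fs zb + (1 - \<eta>) * Fs zz)
            + ((1 - \<eta>) * f (y k) + \<eta> * f x) + ((1 - \<eta>) * Hr (y k) + \<eta> * Hr x)"
        unfolding gap_def using Hs' Fs' fy' Hy' by linarith
      also have "\<dots> \<le> (Hs (- zz) - \<eta> * (zb \<bullet> x - zz \<bullet> x)) + (\<eta> * (x \<bullet> zb - f x) + (1 - \<eta>) * Fs zz)
            + ((1 - \<eta>) * f (y k) + \<eta> * f x) + ((1 - \<eta>) * Hr (y k) + \<eta> * Hr x)"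
        using Fszb \<eta>01 by (simp add: mult_left_mono)
      also have "\<dots> = (1 - \<eta>) * gap k"
        unfolding gap_def zz_def[symmetric] Hsx by (simp add: algebra_simps inner_commute)
      finally show ?thesis .
    qed
    then show ?thesis using Fk' Yk' by simp
  qed
  have induct: "Fc (z k) < \<infinity> \<and> y k \<in> edom h \<and> gap k \<le> (1 - \<eta>) ^ k * gap 0" for k
  proof (induction k)
    case 0
    have "Fc (z 0) < \<infinity>" using z0 unfolding Fc_def .
    moreover have "y 0 \<in> edom h" using y0 HC[of "- z 0"] by simp
    ultimately show ?case by simp
  next
    case (Suc k)
    then have os: "Fc (z (Suc k)) < \<infinity> \<and> y (Suc k) \<in> edom h \<and> gap (Suc k) \<le> (1 - \<eta>) * gap k"
      using onestep by blast
    have "(1 - \<eta>) * gap k \<le> (1 - \<eta>) * ((1 - \<eta>) ^ k * gap 0)"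
      using Suc \<eta>01 by (intro mult_left_mono) auto
    then show ?case using os by simp
  qed
  have oneminus: "1 - \<eta> = 1 / (1 + \<alpha> / L)" using \<eta> L \<alpha> by (simp add: field_simps)
  have cpos: "(1 + \<alpha> / L) ^ k > 0" for k
  proof -
    have "\<alpha> / L > 0" using L \<alpha> by simp
    then have "1 + \<alpha> / L > 0" by linarith
    then show ?thesis by (rule zero_less_power)
  qed
  have lhs: "Hc (- z k) + Fc (z k) + (ereal (f (y k)) + (h (y k) + ereal \<alpha> * w (y k))) = ereal (gap k)" for k
  proof -
    have "Fc (z k) = ereal (Fs (z k))" using induct[of k] Fc_fin by blast
    moreover have "h (y k) + ereal \<alpha> * w (y k) = ereal (Hr (y k))" using induct[of k] Hdom by blast
    ultimately show ?thesis unfolding gap_def using Hc_fin[of "- z k"] by simp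
  qed
  show "Hc (- z k) + Fc (z k) + (ereal (f (y k)) + (h (y k) + ereal \<alpha> * w (y k)))
      \<le> (Hc (- z 0) + Fc (z 0) + (ereal (f (y 0)) + (h (y 0) + ereal \<alpha> * w (y 0)))) / ereal ((1 + \<alpha> / L) ^ k)"
    for k
  proof -
    have "gap k \<le> (1 - \<eta>) ^ k * gap 0" using induct by blast
    also have "\<dots> = gap 0 / (1 + \<alpha> / L) ^ k" unfolding oneminus by (simp add: power_one_over)
    finally have gk: "gap k \<le> gap 0 / (1 + \<alpha> / L) ^ k" .
    have ne: "(1 + \<alpha> / L) ^ k \<noteq> 0" using cpos[of k] by linarith
    have "ereal (gap 0) / ereal ((1 + \<alpha> / L) ^ k) = ereal (gap 0 / (1 + \<alpha> / L) ^ k)"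
      unfolding ereal_divide if_not_P[OF ne] ..
    then show ?thesis unfolding lhs ereal_less_eq(3) using gk by simp
  qed
qed


end
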